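(* Let $z\in\mathcal N_h^I$ and let $\varphi$ be a quadratic polynomial on $\mathbb R^d$. If $\varphi$ has no strict local maximum in $B_\varepsilon(z)$, then $$-\Delta^\diamond_{\infty,\mathfrak h}\varphi(z)\ge-\lambda_{\max}(D^2\varphi)-C\Big(\frac{h^2}{\varepsilon^2}+\theta^2\Big),$$ where $C$ depends on $d$, $D^2\varphi$, and the shape regularity constant of $\mathcal T_h$.
   Context: Setting: $\Omega\subset\mathbb R^d$ ($d\ge1$) is a bounded domain with continuous boundary. For $r>0$, $\Omega^{(r)}=\{x\in\Omega:\operatorname{dist}(x,\partial\Omega)>r\}$. $\mathcal T_h$ is a shape-regular mesh of closed simplices, $h=\max_T\operatorname{diam}T$, $\Omega_h$ the interior of the union of the simplices, with $\Omega^{(h)}\subset\Omega_h\subset\Omega$; $\mathcal N_h$ the set of vertices. $\mathcal I_h$ is the Lagrange interpolant onto continuous piecewise linear functions on $\mathcal T_h$. Parameters $\mathfrak h=(h,\varepsilon,\theta)$, $\varepsilon\in[h,\operatorname{diam}\Omega]$, $0<\theta\le1$. $\mathcal N_h^I=\mathcal N_h\cap\Omega^{(2\varepsilon)}$. $\mathbb S_\theta$: finite symmetric subset of the unit sphere $\mathbb S$ such that each $v\in\mathbb S$ has $v_\theta\in\mathbb S_\theta$ with $|v-v_\theta|\le\theta$. For $z\in\mathcal N_h^I$: $\mathcal N_{\mathfrak h}(z)=\{z\}\cup\{z+\varepsilon v_\theta:v_\theta\in\mathbb S_\theta\}$, and for $w\in C(\overline\Omega)$, $-\Delta^\diamond_{\infty,\mathfrak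 h}w(z)=\varepsilon^{-2}\big(2w(z)-\max_{x\in\mathcal N_{\mathfrak h}(z)}\mathcal I_hw(x)-\min_{x\in\mathcal N_{\mathfrak h}(z)}\mathcal I_hw(x)\big)$. $B_\varepsilon(z)$ is the open Euclidean ball; $\lambda_{\max}$ is the largest eigenvalue. *)

theory Defs
  imports "HOL-Analysis.Analysis"
begin

definition continuous_boundary :: "'a::euclidean_space set \<Rightarrow> bool" where
  "continuous_boundary \<Omega> \<longleftrightarrow>
     (\<forall>p\<in>frontier \<Omega>. \<exists>r>0. \<exists>e. norm e = 1 \<and>
        (\<exists>g :: 'a \<Rightarrow> real. continuous_on {y. y \<bullet> e = 0} g \<and>
           (\<forall>x\<in>ball p r. x \<in> \<Omega> \<longleftrightarrow> x \<bullet> e > g (x - (x \<bullet> e) *\<^sub>R e))))"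

definition admissible_domain :: "'a::euclidean_space set \<Rightarrow> bool" where
  "admissible_domain \<Omega> \<longleftrightarrow> open \<Omega> \<and> connected \<Omega> \<and> \<Omega> \<noteq> {} \<and> bounded \<Omega>
     \<and> continuous_boundary \<Omega>"

definition inner_set :: "'a::euclidean_space set \<Rightarrow> real \<Rightarrow> 'a set" where
  "inner_set \<Omega> r = {x\<in>\<Omega>. infdist x (frontier \<Omega>) > r}"

definition vertices :: "'a::euclidean_space set \<Rightarrow> 'a set" where
  "vertices T = {v. v extreme_point_of T}"

definition is_mesh :: "'a::euclidean_space set set \<Rightarrow> bool" where
  "is_mesh Th \<longleftrightarrow> finite Th \<and> Th \<noteq> {} \<and> (\<forall>T\<in>Th. int DIM('a) simplex T) \<and>
     (\<forall>T1\<in>Th. \<forall>T2\<in>Th. T1 \<inter> T2 = convex hull (vertices T1 \<inter> vertices T2))"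

definition inradius :: "'a::euclidean_space set \<Rightarrow> real" where
  "inradius T = Sup {r. \<exists>x. ball x r \<subseteq> T}"

definition shape_regular :: "real \<Rightarrow> 'a::euclidean_space set set \<Rightarrow> bool" where
  "shape_regular \<sigma> Th \<longleftrightarrow> (\<forall>T\<in>Th. diameter T \<le> \<sigma> * inradius T)"

definition mesh_size :: "'a::euclidean_space set set \<Rightarrow> real" where
  "mesh_size Th = Max (diameter ` Th)"

definition mesh_domain :: "'a::euclidean_space set set \<Rightarrow> 'a set" where
  "mesh_domain Th = interior (\<Union>Th)"

definition mesh_nodes :: "'a::euclidean_space set set \<Rightarrow> 'a set" where
  "mesh_nodes Th = (\<Union>T\<in>Th. vertices T)"

definition bary_coords :: "'a::euclidean_space set \<Rightarrow> 'a \<Rightarrow> ('a \<Rightarrow> real) \<Rightarrow> bool" where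
  "bary_coords V x c \<longleftrightarrow> (\<forall>v\<in>V. c v \<ge> 0) \<and> sum c V = 1 \<and> (\<Sum>v\<in>V. c v *\<^sub>R v) = x"

definition lagrange_interp :: "'a::euclidean_space set set \<Rightarrow> ('a \<Rightarrow> real) \<Rightarrow> 'a \<Rightarrow> real" where
  "lagrange_interp Th w x = (THE y. \<exists>T\<in>Th. x \<in> T \<and>
      (\<exists>c. bary_coords (vertices T) x c \<and> y = (\<Sum>v\<in>vertices T. c v * w v)))"

definition direction_set :: "real \<Rightarrow> 'a::euclidean_space set \<Rightarrow> bool" where
  "direction_set \<theta> S \<longleftrightarrow> finite S \<and> S \<subseteq> sphere 0 1 \<and> (\<forall>v\<in>S. - v \<in> S) \<and>
     (\<forall>v. norm v = 1 \<longrightarrow> (\<exists>u\<in>S. norm (v - u) \<le> \<theta>))"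

definition stencil :: "real \<Rightarrow> 'a::euclidean_space set \<Rightarrow> 'a \<Rightarrow> 'a set" where
  "stencil \<epsilon> S z = insert z ((\<lambda>v. z + \<epsilon> *\<^sub>R v) ` S)"

definition neg_disc_inf_lap ::
  "'a::euclidean_space set set \<Rightarrow> real \<Rightarrow> 'a set \<Rightarrow> ('a \<Rightarrow> real) \<Rightarrow> 'a \<Rightarrow> real" where
  "neg_disc_inf_lap Th \<epsilon> S w z =
     (2 * w z - Max (lagrange_interp Th w ` stencil \<epsilon> S z)
              - Min (lagrange_interp Th w ` stencil \<epsilon> S z)) / \<epsilon>\<^sup>2"

definition self_adjoint :: "('a::euclidean_space \<Rightarrow> 'a) \<Rightarrow> bool" where
  "self_adjoint A \<longleftrightarrow> linear A \<and> (\<forall>x y. A x \<bullet> y = x \<bullet> A y)"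

definition lambda_max :: "('a::euclidean_space \<Rightarrow> 'a) \<Rightarrow> real" where
  "lambda_max A = Max {l. \<exists>v. v \<noteq> 0 \<and> A v = l *\<^sub>R v}"

definition strict_local_max_in :: "('a::euclidean_space \<Rightarrow> real) \<Rightarrow> 'a set \<Rightarrow> bool" where
  "strict_local_max_in f U \<longleftrightarrow>
     (\<exists>x\<in>U. \<exists>r>0. \<forall>y\<in>ball x r. y \<noteq> x \<longrightarrow> f y < f x)"

end

theory Submission
  imports Defs
begin

lemma quad_expand:
  assumes "self_adjoint A"
  shows "(x+y) \<bullet> A (x+y) = x \<bullet> A x + 2*(A x \<bullet> y) + y \<bullet> A y"
proof -
  have l: "linear A" and s: "\<And>x y. A x \<bullet> y = x \<bullet> A y" using assms unfolding self_adjoint_def by auto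
  have "A (x+y) = A x + A y" using l by (simp add: linear_add)
  then have "(x+y) \<bullet> A (x+y) = x \<bullet> A x + x \<bullet> A y + y \<bullet> A x + y \<bullet> A y"
    by (simp add: inner_add_left inner_add_right)
  moreover have "x \<bullet> A y = A x \<bullet> y" using s by simp
  moreover have "y \<bullet> A x = A x \<bullet> y" by (simp add: inner_commute)
  ultimately show ?thesis by simp
qed

lemma quad_scale:
  assumes "self_adjoint A"
  shows "(s *\<^sub>R x) \<bullet> A (s *\<^sub>R x) = s^2 * (x \<bullet> A x)"
proof -
  have l: "linear A" using assms unfolding self_adjoint_def by auto
  have "A (s *\<^sub>R x) = s *\<^sub>R A x" using l by (simp add: linear_scale)
  then show ?thesis by (simp add: power2_eq_square)
qed

lemma quad_bound:
  assumes "\<And>x. norm (A x) \<le> K * norm x"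
  shows "\<bar>x \<bullet> A x\<bar> \<le> K * (norm x)^2"
proof -
  have "\<bar>x \<bullet> A x\<bar> \<le> norm x * norm (A x)" by (rule Cauchy_Schwarz_ineq2)
  also have "\<dots> \<le> norm x * (K * norm x)" by (rule mult_left_mono[OF assms]) simp
  finally show ?thesis by (simp add: power2_eq_square algebra_simps)
qed

lemma poly_zero:
  fixes p q d :: real
  assumes d: "d > 0" and h: "\<And>s. \<bar>s\<bar> \<le> d \<Longrightarrow> p * s + q * s^2 \<le> 0"
  shows "p = 0 \<and> q \<le> 0"
proof -
  have a0: "p = 0"
  proof (rule ccontr)
    assume an: "p \<noteq> 0"
    define r where "r = \<bar>p\<bar> / (2 * (\<bar>q\<bar> + 1))"
    have rp: "r > 0" using an unfolding r_def by (simp add: divide_pos_pos)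
    define s where "s = min d r"
    have sp: "s > 0" using d rp unfolding s_def by simp
    have sd: "s \<le> d" and sr: "s \<le> r" unfolding s_def by auto
    have h1: "p * s + q * s^2 \<le> 0" using h[of s] sp sd by simp
    have h2: "- p * s + q * s^2 \<le> 0" using h[of "-s"] sp sd by simp
    have "\<bar>p\<bar> * s \<le> - q * s^2" using h1 h2 by (cases "p \<ge> 0") auto
    also have "\<dots> \<le> \<bar>q\<bar> * s^2" by (rule mult_right_mono) auto
    finally have "\<bar>p\<bar> * s \<le> (\<bar>q\<bar> * s) * s" by (simp add: power2_eq_square mult.assoc)
    then have c1: "\<bar>p\<bar> \<le> \<bar>q\<bar> * s" using sp by (rule mult_right_le_imp_le)
    have c2: "\<bar>q\<bar> * s \<le> \<bar>q\<bar> * r" using sr by (rule mult_left_mono) simp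
    have c3: "\<bar>q\<bar> * r < \<bar>p\<bar>"
    proof -
      have "\<bar>q\<bar> * r = \<bar>p\<bar> * (\<bar>q\<bar> / (2 * (\<bar>q\<bar> + 1)))" unfolding r_def by simp
      also have "\<bar>q\<bar> / (2 * (\<bar>q\<bar> + 1)) < 1" by simp
      then have "\<bar>p\<bar> * (\<bar>q\<bar> / (2 * (\<bar>q\<bar> + 1))) < \<bar>p\<bar> * 1" using an by (intro mult_strict_left_mono) auto
      finally show ?thesis by simp
    qed
    show False using c1 c2 c3 by simp
  qed
  have "q * d^2 \<le> 0" using h[of d] d a0 by simp
  then have "q \<le> 0" using d by (simp add: mult_le_0_iff)
  then show ?thesis using a0 by simp
qed

lemma eig_finite:
  assumes sa: "self_adjoint A"
  shows "finite {l. \<exists>v. v \<noteq> 0 \<and> A v = l *\<^sub>R v}" (is "finite ?E")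
proof -
  have s: "\<And>x y. A x \<bullet> y = x \<bullet> A y" using sa unfolding self_adjoint_def by auto
  define ev where "ev l = (SOME v. v \<noteq> 0 \<and> A v = l *\<^sub>R v)" for l
  have ev: "ev l \<noteq> 0 \<and> A (ev l) = l *\<^sub>R ev l" if "l \<in> ?E" for l
  proof -
    from that have "\<exists>v. v \<noteq> 0 \<and> A v = l *\<^sub>R v" by simp
    then show ?thesis unfolding ev_def by (rule someI_ex)
  qed
  have inj: "inj_on ev ?E"
  proof (rule inj_onI)
    fix l1 l2 assume h1: "l1 \<in> ?E" and h2: "l2 \<in> ?E" and h3: "ev l1 = ev l2"
    have a1: "A (ev l1) = l1 *\<^sub>R ev l1" using ev[OF h1] by blast
    have a2: "A (ev l1) = l2 *\<^sub>R ev l1" using ev[OF h2] h3 by metis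
    have nz: "ev l1 \<noteq> 0" using ev[OF h1] by blast
    have "l1 *\<^sub>R ev l1 = l2 *\<^sub>R ev l1" by (metis a1 a2)
    then show "l1 = l2" using nz by simp
  qed
  have po: "pairwise orthogonal (ev ` ?E)"
    unfolding pairwise_def
  proof (intro ballI impI)
    fix x y assume hx: "x \<in> ev ` ?E" and hy: "y \<in> ev ` ?E" and xy: "x \<noteq> y"
    obtain l1 where l1: "l1 \<in> ?E" "x = ev l1" using hx by blast
    obtain l2 where l2: "l2 \<in> ?E" "y = ev l2" using hy by blast
    have "l1 \<noteq> l2" using xy l1 l2 by blast
    have e1: "A x = l1 *\<^sub>R x" using ev[OF l1(1)] l1(2) by blast
    have e2: "A y = l2 *\<^sub>R y" using ev[OF l2(1)] l2(2) by blast
    have "l1 * (x \<bullet> y) = A x \<bullet> y" using e1 by simp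
    also have "\<dots> = x \<bullet> A y" by (rule s)
    also have "\<dots> = l2 * (x \<bullet> y)" using e2 by simp
    finally have "(l1 - l2) * (x \<bullet> y) = 0" by (simp add: left_diff_distrib)
    then have "x \<bullet> y = 0" using \<open>l1 \<noteq> l2\<close> by simp
    then show "orthogonal x y" unfolding orthogonal_def .
  qed
  have "0 \<notin> ev ` ?E"
  proof
    assume "0 \<in> ev ` ?E"
    then obtain l where "l \<in> ?E" "0 = ev l" by blast
    then show False using ev by metis
  qed
  then have "independent (ev ` ?E)" using po by (intro pairwise_orthogonal_independent)
  then have "finite (ev ` ?E)" by (rule finiteI_independent)
  then show ?thesis using inj by (rule finite_imageD)
qed

lemma rayleigh:
  assumes sa: "self_adjoint A" and nv: "norm v = 1"
  shows "v \<bullet> A v \<le> lambda_max A"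
proof -
  have l: "linear A" using sa unfolding self_adjoint_def by auto
  have cA: "continuous_on UNIV A" using l by (simp add: linear_continuous_on linear_linear)
  have cq: "continuous_on (sphere 0 1) (\<lambda>v. v \<bullet> A v)"
    by (intro continuous_intros continuous_on_subset[OF cA]) auto
  have ne: "sphere (0::'a) 1 \<noteq> {}" using nv by auto
  obtain v0 where v0: "v0 \<in> sphere 0 1" and mx: "\<And>y. y \<in> sphere 0 1 \<Longrightarrow> y \<bullet> A y \<le> v0 \<bullet> A v0"
    using continuous_attains_sup[OF compact_sphere ne cq] by blast
  define q0 where "q0 = v0 \<bullet> A v0"
  have n0: "norm v0 = 1" using v0 by simp
  have ray: "u \<bullet> A u \<le> q0 * (norm u)^2" for u
  proof (cases "u = 0")
    case True then show ?thesis using l by (simp add: linear_0)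
  next
    case False
    have "(inverse (norm u) *\<^sub>R u) \<bullet> A (inverse (norm u) *\<^sub>R u) \<le> q0"
      unfolding q0_def by (rule mx) (use False in simp)
    moreover have "(inverse (norm u) *\<^sub>R u) \<bullet> A (inverse (norm u) *\<^sub>R u) = (inverse (norm u))^2 * (u \<bullet> A u)"
      by (rule quad_scale[OF sa])
    ultimately have "(inverse (norm u))^2 * (u \<bullet> A u) \<le> q0" by linarith
    then show ?thesis using False by (simp add: field_simps power2_eq_square)
  qed
  have orth: "(A v0 - q0 *\<^sub>R v0) \<bullet> t = 0" for t
  proof -
    have "\<And>s. \<bar>s\<bar> \<le> 1 \<Longrightarrow> (2*(A v0 \<bullet> t - q0 * (v0 \<bullet> t))) * s + (t \<bullet> A t - q0 * (t \<bullet> t)) * s^2 \<le> 0"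
    proof -
      fix s :: real
      have e1: "(v0 + s *\<^sub>R t) \<bullet> A (v0 + s *\<^sub>R t) = q0 + 2 * s * (A v0 \<bullet> t) + s^2 * (t \<bullet> A t)"
        unfolding quad_expand[OF sa] quad_scale[OF sa] q0_def by simp
      have vv: "v0 \<bullet> v0 = 1" using n0 by (simp add: dot_square_norm)
      have "(norm (v0 + s *\<^sub>R t))^2 = (v0 + s *\<^sub>R t) \<bullet> (v0 + s *\<^sub>R t)" by (rule power2_norm_eq_inner)
      also have "\<dots> = v0 \<bullet> v0 + 2 * s * (v0 \<bullet> t) + s^2 * (t \<bullet> t)"
        by (simp add: inner_add_left inner_add_right inner_commute power2_eq_square)
      finally have e2: "(norm (v0 + s *\<^sub>R t))^2 = 1 + 2 * s * (v0 \<bullet> t) + s^2 * (t \<bullet> t)" using vv by simp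
      have r: "q0 + 2 * s * (A v0 \<bullet> t) + s^2 * (t \<bullet> A t) \<le> q0 * (1 + 2 * s * (v0 \<bullet> t) + s^2 * (t \<bullet> t))"
        using ray[of "v0 + s *\<^sub>R t"] unfolding e1 e2 .
      show "(2*(A v0 \<bullet> t - q0 * (v0 \<bullet> t))) * s + (t \<bullet> A t - q0 * (t \<bullet> t)) * s^2 \<le> 0"
        using r by (simp add: algebra_simps)
    qed
    then have "2*(A v0 \<bullet> t - q0 * (v0 \<bullet> t)) = 0 \<and> (t \<bullet> A t - q0 * (t \<bullet> t)) \<le> 0"
      by (intro poly_zero[where d=1]) auto
    then show ?thesis by (simp add: inner_diff_left)
  qed
  have "A v0 - q0 *\<^sub>R v0 = 0" using orth[of "A v0 - q0 *\<^sub>R v0"] by simp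
  then have "q0 \<in> {l. \<exists>v. v \<noteq> 0 \<and> A v = l *\<^sub>R v}" using n0 by (intro CollectI exI[of _ v0]) auto
  then have "q0 \<le> lambda_max A" unfolding lambda_max_def using eig_finite[OF sa] by simp
  moreover have "v \<bullet> A v \<le> q0" using ray[of v] nv by simp
  ultimately show ?thesis by simp
qed


lemma phi_expand:
  assumes sa: "self_adjoint A" and ph: "\<forall>x. \<phi> x = c + b \<bullet> x + (1/2) * (x \<bullet> A x)"
  shows "\<phi> (x + y) = \<phi> x + (b + A x) \<bullet> y + (1/2) * (y \<bullet> A y)"
  using ph quad_expand[OF sa, of x y] by (simp add: inner_add_left inner_add_right algebra_simps)

lemma phi_cont:
  assumes sa: "self_adjoint A" and ph: "\<forall>x. \<phi> x = c + b \<bullet> x + (1/2) * (x \<bullet> A x)"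
  shows "continuous_on S \<phi>"
proof -
  have l: "linear A" using sa unfolding self_adjoint_def by auto
  have cA: "continuous_on UNIV A" using l by (simp add: linear_continuous_on linear_linear)
  have "\<phi> = (\<lambda>x. c + b \<bullet> x + (1/2) * (x \<bullet> A x))" using ph by auto
  moreover have "continuous_on S (\<lambda>x. c + b \<bullet> x + (1/2) * (x \<bullet> A x))"
    by (intro continuous_intros continuous_on_subset[OF cA]) auto
  ultimately show ?thesis by simp
qed

lemma sphere_max_nonneg:
  fixes z :: "'a::euclidean_space"
  assumes sa: "self_adjoint A" and ph: "\<forall>x. \<phi> x = c + b \<bullet> x + (1/2) * (x \<bullet> A x)"
    and ep: "\<epsilon> > 0" and nsl: "\<not> strict_local_max_in \<phi> (ball z \<epsilon>)"
  shows "\<exists>v0. norm v0 = 1 \<and> \<phi> z \<le> \<phi> (z + \<epsilon> *\<^sub>R v0) \<and> (\<forall>v. norm v = 1 \<longrightarrow> \<phi> (z + \<epsilon> *\<^sub>R v) \<le> \<phi> (z + \<epsilon> *\<^sub>R v0))"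
proof -
  have ne: "sphere (0::'a) 1 \<noteq> {}"
  proof -
    obtain e :: 'a where "e \<in> Basis" using nonempty_Basis by blast
    then show ?thesis by (intro ex_in_conv[THEN iffD1] exI[of _ e]) auto
  qed
  have cf: "continuous_on (sphere 0 1) (\<lambda>v. \<phi> (z + \<epsilon> *\<^sub>R v))"
    by (intro continuous_on_compose2[OF phi_cont[OF sa ph, of UNIV]] continuous_intros) auto
  obtain v0 where v0: "v0 \<in> sphere 0 1" and mx: "\<And>y. y \<in> sphere 0 1 \<Longrightarrow> \<phi> (z + \<epsilon> *\<^sub>R y) \<le> \<phi> (z + \<epsilon> *\<^sub>R v0)"
    using continuous_attains_sup[OF compact_sphere ne cf] by blast
  have n0: "norm v0 = 1" using v0 by simp
  have mx': "\<phi> (z + \<epsilon> *\<^sub>R v) \<le> \<phi> (z + \<epsilon> *\<^sub>R v0)" if "norm v = 1" for v using mx that by simp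
  have onsph: "\<phi> w \<le> \<phi> (z + \<epsilon> *\<^sub>R v0)" if "dist z w = \<epsilon>" for w
  proof -
    define v where "v = inverse \<epsilon> *\<^sub>R (w - z)"
    have "norm v = 1" using that ep unfolding v_def by (simp add: dist_norm norm_minus_commute)
    moreover have "z + \<epsilon> *\<^sub>R v = w" using ep unfolding v_def by simp
    ultimately show ?thesis using mx' by metis
  qed
  have "\<phi> z \<le> \<phi> (z + \<epsilon> *\<^sub>R v0)"
  proof (rule ccontr)
    assume less: "\<not> ?thesis"
    have cne: "cball z \<epsilon> \<noteq> {}" using ep by auto
    obtain x0 where x0: "x0 \<in> cball z \<epsilon>" and mx0: "\<And>y. y \<in> cball z \<epsilon> \<Longrightarrow> \<phi> y \<le> \<phi> x0"
      using continuous_attains_sup[OF compact_cball cne phi_cont[OF sa ph]] by blast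
    have zx0: "\<phi> z \<le> \<phi> x0" using mx0 ep by simp
    have dlt: "dist z x0 < \<epsilon>"
    proof (rule ccontr)
      assume "\<not> dist z x0 < \<epsilon>"
      then have "dist z x0 = \<epsilon>" using x0 by simp
      then show False using onsph[of x0] zx0 less by simp
    qed
    define r where "r = \<epsilon> - dist z x0"
    have rp: "r > 0" using dlt unfolding r_def by simp
    have sub: "ball x0 r \<subseteq> cball z \<epsilon>"
    proof
      fix x assume "x \<in> ball x0 r"
      then have "dist x0 x < r" by simp
      moreover have "dist z x \<le> dist z x0 + dist x0 x" by (rule dist_triangle)
      ultimately show "x \<in> cball z \<epsilon>" unfolding r_def by simp
    qed
    have "strict_local_max_in \<phi> (ball z \<epsilon>)"
      unfolding strict_local_max_in_def
    proof (intro bexI[of _ x0] exI[of _ r] conjI ballI impI rp)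
      show "x0 \<in> ball z \<epsilon>" using dlt by simp
      fix y assume y: "y \<in> ball x0 r" "y \<noteq> x0"
      show "\<phi> y < \<phi> x0"
      proof (rule ccontr)
        assume "\<not> \<phi> y < \<phi> x0"
        then have eqy: "\<phi> y = \<phi> x0" using mx0[of y] sub y by force
        define t where "t = y - x0"
        have tn: "t \<noteq> 0" using y unfolding t_def by simp
        have tr: "norm t < r" using y unfolding t_def by (simp add: dist_norm norm_minus_commute)
        have "\<And>s. \<bar>s\<bar> \<le> 1 \<Longrightarrow> ((b + A x0) \<bullet> t) * s + ((1/2) * (t \<bullet> A t)) * s^2 \<le> 0"
        proof -
          fix s :: real assume s: "\<bar>s\<bar> \<le> 1"
          have "norm (s *\<^sub>R t) \<le> norm t" using s by (simp add: mult_left_le_one_le)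
          then have "x0 + s *\<^sub>R t \<in> ball x0 r" using tr by (simp add: dist_norm)
          then have "\<phi> (x0 + s *\<^sub>R t) \<le> \<phi> x0" using mx0 sub by blast
          then show "((b + A x0) \<bullet> t) * s + ((1/2) * (t \<bullet> A t)) * s^2 \<le> 0"
            unfolding phi_expand[OF sa ph] quad_scale[OF sa] by (simp add: algebra_simps)
        qed
        note H = this
        have g0: "(b + A x0) \<bullet> t = 0" using poly_zero[where d=1, OF _ H] by simp
        have "\<phi> y = \<phi> x0 + (1/2) * (t \<bullet> A t)"
          using phi_expand[OF sa ph, of x0 t] g0 unfolding t_def by simp
        then have tt: "t \<bullet> A t = 0" using eqy by simp
        have const: "\<phi> (x0 + s *\<^sub>R t) = \<phi> x0" for s
          unfolding phi_expand[OF sa ph] quad_scale[OF sa] using g0 tt by simp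
        define f where "f s = dist z (x0 + s *\<^sub>R t)" for s
        define S where "S = 2 * \<epsilon> / norm t"
        have Sp: "S \<ge> 0" using ep unfolding S_def by simp
        have fS: "\<epsilon> \<le> f S"
        proof -
          have "norm (S *\<^sub>R t) = 2 * \<epsilon>" using tn ep unfolding S_def by simp
          moreover have "norm (S *\<^sub>R t) \<le> dist z x0 + f S"
            unfolding f_def dist_norm using norm_triangle_ineq4[of "x0 + S *\<^sub>R t - z" "x0 - z"]
            by (simp add: norm_minus_commute algebra_simps)
          ultimately show ?thesis using dlt by simp
        qed
        have f0: "f 0 \<le> \<epsilon>" using dlt unfolding f_def by simp
        have cfn: "continuous_on {0..S} f" unfolding f_def by (intro continuous_intros)
        obtain s where "f s = \<epsilon>" using IVT'[of f 0 \<epsilon> S, OF f0 fS Sp cfn] by blast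
        then have "\<phi> (x0 + s *\<^sub>R t) \<le> \<phi> (z + \<epsilon> *\<^sub>R v0)" using onsph unfolding f_def by blast
        then show False using const[of s] zx0 less by simp
      qed
    qed
    then show False using nsl by simp
  qed
  then show ?thesis using n0 mx' by blast
qed


lemma reflect_bound:
  fixes z v v0 :: "'a::euclidean_space"
  assumes sa: "self_adjoint A" and ph: "\<forall>x. \<phi> x = c + b \<bullet> x + (1/2) * (x \<bullet> A x)"
    and KA: "\<And>x. norm (A x) \<le> K * norm x" and K0: "K \<ge> 0"
    and n0: "norm v0 = 1" and F0: "\<phi> z \<le> \<phi> (z + \<epsilon> *\<^sub>R v0)"
    and mx: "\<forall>v. norm v = 1 \<longrightarrow> \<phi> (z + \<epsilon> *\<^sub>R v) \<le> \<phi> (z + \<epsilon> *\<^sub>R v0)"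
    and nv: "norm v = 1" and vt: "norm (v - v0) \<le> \<theta>" and t1: "\<theta> \<le> 1"
  shows "\<phi> (z + \<epsilon> *\<^sub>R v) - \<phi> z \<ge> - (3/2) * K * \<epsilon>^2 * \<theta>^2"
proof -
  define x0 where "x0 = z + \<epsilon> *\<^sub>R v0"
  define g where "g = b + A x0"
  define w where "w = v - v0"
  define W where "W = (norm w)^2"
  define v' where "v' = (2 * (v \<bullet> v0)) *\<^sub>R v0 - v"
  define w' where "w' = v' - v0"
  have vv0: "v0 \<bullet> v0 = 1" using n0 by (simp add: dot_square_norm)
  have vv: "v \<bullet> v = 1" using nv by (simp add: dot_square_norm)
  have W: "W = 2 - 2 * (v \<bullet> v0)"
    unfolding W_def w_def power2_norm_eq_inner using vv vv0
    by (simp add: inner_diff_left inner_diff_right inner_commute)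
  have vpp: "v' \<bullet> v' = 1" unfolding v'_def using vv vv0
      by (simp add: inner_diff_left inner_diff_right inner_commute power2_eq_square algebra_simps)
  have nv': "norm v' = 1" using vpp by (simp add: norm_eq_sqrt_inner)
  have w'e: "w' = - w - W *\<^sub>R v0"
    unfolding w'_def v'_def w_def W by (simp add: algebra_simps scaleR_2)
  have W': "(norm w')^2 = W"
  proof -
    have "(norm w')^2 = w' \<bullet> w'" by (rule power2_norm_eq_inner)
    also have "\<dots> = v' \<bullet> v' - 2 * (v' \<bullet> v0) + v0 \<bullet> v0" unfolding w'_def
      by (simp add: inner_diff_left inner_diff_right inner_commute)
    also have "\<dots> = 2 - 2 * (v' \<bullet> v0)" using vpp vv0 by simp
    also have "v' \<bullet> v0 = v \<bullet> v0" unfolding v'_def using vv0 by (simp add: inner_diff_left)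
    finally show ?thesis using W by simp
  qed
  have exp: "\<phi> (x0 + \<epsilon> *\<^sub>R u) = \<phi> x0 + \<epsilon> * (g \<bullet> u) + (1/2) * \<epsilon>^2 * (u \<bullet> A u)" for u
    unfolding phi_expand[OF sa ph] quad_scale[OF sa] g_def by simp
  have fv: "\<phi> (z + \<epsilon> *\<^sub>R v) = \<phi> x0 + \<epsilon> * (g \<bullet> w) + (1/2) * \<epsilon>^2 * (w \<bullet> A w)"
  proof -
    have "z + \<epsilon> *\<^sub>R v = x0 + \<epsilon> *\<^sub>R w" unfolding x0_def w_def by (simp add: algebra_simps)
    then show ?thesis using exp by simp
  qed
  have "\<phi> (z + \<epsilon> *\<^sub>R v') \<le> \<phi> x0" using mx nv' unfolding x0_def by blast
  moreover have "z + \<epsilon> *\<^sub>R v' = x0 + \<epsilon> *\<^sub>R w'" unfolding x0_def w'_def by (simp add: algebra_simps)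
  ultimately have r1: "\<epsilon> * (g \<bullet> w') + (1/2) * \<epsilon>^2 * (w' \<bullet> A w') \<le> 0" using exp by simp
  have gw': "g \<bullet> w' = - (g \<bullet> w) - W * (g \<bullet> v0)" unfolding w'e by (simp add: inner_diff_right)
  have phz: "\<phi> z = \<phi> x0 - \<epsilon> * (g \<bullet> v0) + (1/2) * \<epsilon>^2 * (v0 \<bullet> A v0)"
  proof -
    have "z = x0 + \<epsilon> *\<^sub>R (- v0)" unfolding x0_def by simp
    then have "\<phi> z = \<phi> (x0 + \<epsilon> *\<^sub>R (- v0))" by simp
    also have "\<dots> = \<phi> x0 + \<epsilon> * (g \<bullet> (-v0)) + (1/2) * \<epsilon>^2 * ((-v0) \<bullet> A (-v0))" by (rule exp)
    also have "(-v0) \<bullet> A (-v0) = v0 \<bullet> A v0" using quad_scale[OF sa, of "-1" v0] by simp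
    finally show ?thesis by simp
  qed
  define F where "F = \<phi> x0 - \<phi> z"
  have Fp: "F \<ge> 0" using F0 unfolding F_def x0_def by simp
  define E where "E = \<epsilon>^2"
  have Ep: "E \<ge> 0" unfolding E_def by simp
  have q1: "w \<bullet> A w \<ge> - K * W" using quad_bound[OF KA, of w] unfolding W_def by linarith
  have "\<bar>w' \<bullet> A w'\<bar> \<le> K * W" using quad_bound[OF KA, of w'] W' by simp
  then have q2: "w' \<bullet> A w' \<ge> - K * W" by (simp add: abs_le_iff)
  have q3: "v0 \<bullet> A v0 \<le> K" using quad_bound[OF KA, of v0] n0 by simp
  have bq: "\<epsilon> * (g \<bullet> v0) = F + (1/2) * E * (v0 \<bullet> A v0)" using phz unfolding F_def E_def by simp
  have W0: "W \<ge> 0" unfolding W_def by simp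
  have Wt: "W \<le> \<theta>^2" unfolding W_def using vt w_def by (simp add: power_mono)
  have W1: "W \<le> 1" using Wt t1 vt by (smt (verit) norm_ge_zero power_le_one)
  have a1: "\<epsilon> * (g \<bullet> w) \<ge> - (W * (\<epsilon> * (g \<bullet> v0))) + (1/2) * (E * (w' \<bullet> A w'))"
    using r1 unfolding gw' E_def by (simp add: algebra_simps)
  have "E * (v0 \<bullet> A v0) \<le> E * K" using q3 Ep by (rule mult_left_mono)
  then have "\<epsilon> * (g \<bullet> v0) \<le> F + (1/2) * (E * K)" unfolding bq by simp
  then have "W * (\<epsilon> * (g \<bullet> v0)) \<le> W * (F + (1/2) * (E * K))" using W0 by (rule mult_left_mono)
  then have a2: "W * (\<epsilon> * (g \<bullet> v0)) \<le> W * F + (1/2) * (K * E * W)" by (simp add: algebra_simps)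
  have "E * (- K * W) \<le> E * (w' \<bullet> A w')" using q2 Ep by (rule mult_left_mono)
  then have a3: "- (K * E * W) \<le> E * (w' \<bullet> A w')" by (simp add: algebra_simps)
  have "E * (- K * W) \<le> E * (w \<bullet> A w)" using q1 Ep by (rule mult_left_mono)
  then have a4: "- (K * E * W) \<le> E * (w \<bullet> A w)" by (simp add: algebra_simps)
  have a5: "W * F \<le> F" using mult_right_mono[OF W1 Fp] by simp
  have "\<phi> (z + \<epsilon> *\<^sub>R v) - \<phi> z = F + \<epsilon> * (g \<bullet> w) + (1/2) * (E * (w \<bullet> A w))"
    unfolding fv F_def E_def by simp
  also have "\<dots> \<ge> - (3/2) * (K * E * W)"
    using a1 a2 a3 a4 a5 by linarith
  finally have "\<phi> (z + \<epsilon> *\<^sub>R v) - \<phi> z \<ge> - (3/2) * (K * E * W)" .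
  note fin = this
  have "K * E * W \<le> K * E * \<theta>^2" using Wt K0 Ep by (simp add: mult_left_mono)
  then have m: "(3/2) * (K * E * W) \<le> (3/2) * (K * E * \<theta>^2)" by (rule mult_left_mono) simp
  have X: "- (3/2) * K * \<epsilon>^2 * \<theta>^2 = - ((3/2) * (K * E * \<theta>^2))" unfolding E_def by (simp add: mult.assoc)
  show ?thesis unfolding X using fin m by linarith
qed

lemma simplex_facts:
  fixes Th :: "'a::euclidean_space set set"
  assumes m: "is_mesh Th" and T: "T \<in> Th"
  shows "\<not> affine_dependent (vertices T) \<and> finite (vertices T) \<and> T = convex hull (vertices T)
         \<and> card (vertices T) = DIM('a) + 1"
proof -
  have "int DIM('a) simplex T" using m T unfolding is_mesh_def by auto
  then obtain C :: "'a set" where C: "\<not> affine_dependent C" "int (card C) = int DIM('a) + 1" "T = convex hull C"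
    unfolding simplex_def by blast
  have "vertices T = C" unfolding vertices_def C(3)
    using extreme_point_of_convex_hull_affine_independent[OF C(1)] by auto
  moreover have "finite C" using C(1) by (rule aff_independent_finite)
  ultimately show ?thesis using C by auto
qed

lemma bary_unique:
  assumes fin: "finite V" and ai: "\<not> affine_dependent V"
    and c1: "bary_coords V x c1" and c2: "bary_coords V x c2" and v: "v \<in> V"
  shows "c1 v = c2 v"
proof (rule ccontr)
  assume ne: "c1 v \<noteq> c2 v"
  define U where "U y = c1 y - c2 y" for y
  have "sum U V = 0" using c1 c2 unfolding U_def bary_coords_def by (simp add: sum_subtractf)
  moreover have "(\<Sum>y\<in>V. U y *\<^sub>R y) = 0" using c1 c2 unfolding U_def bary_coords_def
    by (simp add: scaleR_diff_left sum_subtractf)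
  moreover have "\<exists>y\<in>V. U y \<noteq> 0" using ne v unfolding U_def by auto
  ultimately have "affine_dependent V" using affine_dependent_explicit_finite[OF fin] by blast
  then show False using ai by simp
qed

lemma restrict_bary:
  assumes fin: "finite V" and sub: "W \<subseteq> V" and c: "bary_coords W x c"
  shows "bary_coords V x (\<lambda>v. if v \<in> W then c v else 0)
     \<and> (\<Sum>v\<in>V. (if v \<in> W then c v else 0) * w v) = (\<Sum>v\<in>W. c v * w v)"
proof -
  have VW: "V \<inter> W = W" using sub by auto
  have s1: "sum (\<lambda>v. if v \<in> W then c v else 0) V = sum c W"
    using sum.inter_restrict[OF fin, of c W] VW by simp
  have e2: "(\<lambda>v. (if v \<in> W then c v else 0) *\<^sub>R v) = (\<lambda>v. if v \<in> W then c v *\<^sub>R v else 0)" by auto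
  have s2: "(\<Sum>v\<in>V. (if v \<in> W then c v else 0) *\<^sub>R v) = (\<Sum>v\<in>W. c v *\<^sub>R v)"
    unfolding e2 using sum.inter_restrict[OF fin, of "\<lambda>v. c v *\<^sub>R v" W] VW by simp
  have e3: "(\<lambda>v. (if v \<in> W then c v else 0) * w v) = (\<lambda>v. if v \<in> W then c v * w v else 0)" by auto
  have s3: "(\<Sum>v\<in>V. (if v \<in> W then c v else 0) * w v) = (\<Sum>v\<in>W. c v * w v)"
    unfolding e3 using sum.inter_restrict[OF fin, of "\<lambda>v. c v * w v" W] VW by simp
  show ?thesis using c s1 s2 s3 unfolding bary_coords_def by auto
qed

lemma cross_unique:
  assumes m: "is_mesh Th" and T1: "T1 \<in> Th" and T2: "T2 \<in> Th"
    and x1: "x \<in> T1" and x2: "x \<in> T2"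
    and c1: "bary_coords (vertices T1) x c1" and c2: "bary_coords (vertices T2) x c2"
  shows "(\<Sum>v\<in>vertices T1. c1 v * w v) = (\<Sum>v\<in>vertices T2. c2 v * w v)"
proof -
  let ?V1 = "vertices T1" and ?V2 = "vertices T2"
  have f1: "\<not> affine_dependent ?V1" "finite ?V1" using simplex_facts[OF m T1] by auto
  have f2: "\<not> affine_dependent ?V2" "finite ?V2" using simplex_facts[OF m T2] by auto
  have "T1 \<inter> T2 = convex hull (?V1 \<inter> ?V2)" using m T1 T2 unfolding is_mesh_def by blast
  then have "x \<in> convex hull (?V1 \<inter> ?V2)" using x1 x2 by auto
  moreover have fi: "finite (?V1 \<inter> ?V2)" using f1 by simp
  ultimately obtain c where c: "bary_coords (?V1 \<inter> ?V2) x c"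
    unfolding convex_hull_finite[OF fi] bary_coords_def by blast
  define c' where "c' v = (if v \<in> ?V1 \<inter> ?V2 then c v else 0)" for v
  have r1: "bary_coords ?V1 x c' \<and> (\<Sum>v\<in>?V1. c' v * w v) = (\<Sum>v\<in>?V1 \<inter> ?V2. c v * w v)"
    unfolding c'_def by (rule restrict_bary[OF f1(2) _ c]) auto
  have r2: "bary_coords ?V2 x c' \<and> (\<Sum>v\<in>?V2. c' v * w v) = (\<Sum>v\<in>?V1 \<inter> ?V2. c v * w v)"
    unfolding c'_def by (rule restrict_bary[OF f2(2) _ c]) auto
  have "(\<Sum>v\<in>?V1. c1 v * w v) = (\<Sum>v\<in>?V1. c' v * w v)"
    using bary_unique[OF f1(2) f1(1) c1] r1 by (intro sum.cong) auto
  moreover have "(\<Sum>v\<in>?V2. c2 v * w v) = (\<Sum>v\<in>?V2. c' v * w v)"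
    using bary_unique[OF f2(2) f2(1) c2] r2 by (intro sum.cong) auto
  ultimately show ?thesis using r1 r2 by simp
qed

lemma interp_value:
  assumes m: "is_mesh Th" and x: "x \<in> \<Union>Th"
  shows "\<exists>T\<in>Th. x \<in> T \<and> (\<exists>c. bary_coords (vertices T) x c \<and> lagrange_interp Th w x = (\<Sum>v\<in>vertices T. c v * w v))"
proof -
  obtain T where T: "T \<in> Th" "x \<in> T" using x by auto
  have f: "finite (vertices T)" "T = convex hull (vertices T)" using simplex_facts[OF m T(1)] by auto
  obtain c where c: "bary_coords (vertices T) x c"
    using T(2) f unfolding convex_hull_finite[OF f(1)] bary_coords_def by blast
  define y0 where "y0 = (\<Sum>v\<in>vertices T. c v * w v)"
  have "lagrange_interp Th w x = y0"
    unfolding lagrange_interp_def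
  proof (rule the_equality)
    show "\<exists>T\<in>Th. x \<in> T \<and> (\<exists>c. bary_coords (vertices T) x c \<and> y0 = (\<Sum>v\<in>vertices T. c v * w v))"
      using T c unfolding y0_def by blast
    fix y assume "\<exists>T\<in>Th. x \<in> T \<and> (\<exists>c. bary_coords (vertices T) x c \<and> y = (\<Sum>v\<in>vertices T. c v * w v))"
    then obtain T' c' where h: "T' \<in> Th" "x \<in> T'" "bary_coords (vertices T') x c'" "y = (\<Sum>v\<in>vertices T'. c' v * w v)"
      by blast
    show "y = y0" unfolding y0_def h(4) by (rule cross_unique[OF m h(1) T(1) h(2) T(2) h(3) c])
  qed
  then show ?thesis using T c unfolding y0_def by blast
qed

lemma bary_err:
  assumes sa: "self_adjoint A" and ph: "\<forall>x. \<phi> x = c0 + b \<bullet> x + (1/2) * (x \<bullet> A x)"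
    and KA: "\<And>x. norm (A x) \<le> K * norm x" and K0: "K \<ge> 0"
    and fin: "finite V" and c: "bary_coords V x c" and hv: "\<And>v. v \<in> V \<Longrightarrow> norm (v - x) \<le> h"
  shows "\<bar>(\<Sum>v\<in>V. c v * \<phi> v) - \<phi> x\<bar> \<le> (1/2) * K * h^2"
proof -
  have cp: "\<And>v. v \<in> V \<Longrightarrow> c v \<ge> 0" and cs: "sum c V = 1" and cx: "(\<Sum>v\<in>V. c v *\<^sub>R v) = x"
    using c unfolding bary_coords_def by auto
  define g where "g = b + A x"
  define q where "q v = (v - x) \<bullet> A (v - x)" for v
  have e: "c v * \<phi> v = c v * \<phi> x + g \<bullet> (c v *\<^sub>R (v - x)) + (1/2) * (c v * q v)" for v
  proof -
    have "\<phi> v = \<phi> (x + (v - x))" by simp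
    also have "\<dots> = \<phi> x + g \<bullet> (v - x) + (1/2) * q v" unfolding phi_expand[OF sa ph] g_def q_def ..
    finally have h: "\<phi> v = \<phi> x + g \<bullet> (v - x) + (1/2) * q v" .
    have "c v * \<phi> v = c v * \<phi> x + c v * (g \<bullet> (v - x)) + c v * ((1/2) * q v)"
      unfolding h by (simp only: distrib_left)
    then show ?thesis by (simp add: algebra_simps)
  qed
  have "(\<Sum>v\<in>V. c v * \<phi> v) = (\<Sum>v\<in>V. c v * \<phi> x) + (\<Sum>v\<in>V. g \<bullet> (c v *\<^sub>R (v - x))) + (\<Sum>v\<in>V. (1/2) * (c v * q v))"
    unfolding e by (simp add: sum.distrib)
  also have "(\<Sum>v\<in>V. c v * \<phi> x) = \<phi> x"
  proof -
    have "(\<Sum>v\<in>V. c v * \<phi> x) = sum c V * \<phi> x" by (rule sum_distrib_right[symmetric])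
    then show ?thesis using cs by simp
  qed
  also have "(\<Sum>v\<in>V. g \<bullet> (c v *\<^sub>R (v - x))) = g \<bullet> (\<Sum>v\<in>V. c v *\<^sub>R (v - x))" by (simp add: inner_sum_right)
  also have "(\<Sum>v\<in>V. c v *\<^sub>R (v - x)) = 0"
  proof -
    have "(\<Sum>v\<in>V. c v *\<^sub>R (v - x)) = (\<Sum>v\<in>V. c v *\<^sub>R v) - (\<Sum>v\<in>V. c v *\<^sub>R x)"
      by (simp add: scaleR_diff_right sum_subtractf)
    also have "(\<Sum>v\<in>V. c v *\<^sub>R x) = x"
    proof -
      have "(\<Sum>v\<in>V. c v *\<^sub>R x) = sum c V *\<^sub>R x" by (rule scaleR_sum_left[symmetric])
      then show ?thesis using cs by simp
    qed
    finally show ?thesis using cx by simp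
  qed
  also have "(\<Sum>v\<in>V. (1/2) * (c v * q v)) = (1/2) * (\<Sum>v\<in>V. c v * q v)" by (simp add: sum_distrib_left)
  finally have eq: "(\<Sum>v\<in>V. c v * \<phi> v) - \<phi> x = (1/2) * (\<Sum>v\<in>V. c v * q v)" by simp
  have "\<bar>\<Sum>v\<in>V. c v * q v\<bar> \<le> (\<Sum>v\<in>V. \<bar>c v * q v\<bar>)" by (rule sum_abs)
  also have "\<dots> \<le> (\<Sum>v\<in>V. c v * (K * h^2))"
  proof (rule sum_mono)
    fix v assume v: "v \<in> V"
    have "\<bar>q v\<bar> \<le> K * (norm (v - x))^2" unfolding q_def by (rule quad_bound[OF KA])
    also have "\<dots> \<le> K * h^2" using hv[OF v] K0 by (intro mult_left_mono power_mono) auto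
    finally have "\<bar>q v\<bar> \<le> K * h^2" .
    then show "\<bar>c v * q v\<bar> \<le> c v * (K * h^2)" using cp[OF v] by (simp add: abs_mult mult_left_mono)
  qed
  also have "\<dots> = K * h^2"
  proof -
    have "(\<Sum>v\<in>V. c v * (K * h^2)) = sum c V * (K * h^2)" by (rule sum_distrib_right[symmetric])
    then show ?thesis using cs by simp
  qed
  finally have "\<bar>\<Sum>v\<in>V. c v * q v\<bar> \<le> K * h^2" .
  then show ?thesis unfolding eq by simp
qed

lemma interp_err:
  assumes sa: "self_adjoint A" and ph: "\<forall>x. \<phi> x = c0 + b \<bullet> x + (1/2) * (x \<bullet> A x)"
    and KA: "\<And>x. norm (A x) \<le> K * norm x" and K0: "K \<ge> 0"
    and m: "is_mesh Th" and x: "x \<in> \<Union>Th" and hT: "\<And>T. T \<in> Th \<Longrightarrow> diameter T \<le> h"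
  shows "\<bar>lagrange_interp Th \<phi> x - \<phi> x\<bar> \<le> (1/2) * K * h^2"
proof -
  obtain T c where T: "T \<in> Th" "x \<in> T" and c: "bary_coords (vertices T) x c"
    and eq: "lagrange_interp Th \<phi> x = (\<Sum>v\<in>vertices T. c v * \<phi> v)"
    using interp_value[OF m x] by blast
  have f: "finite (vertices T)" "T = convex hull (vertices T)" using simplex_facts[OF m T(1)] by auto
  have bT: "bounded T"
  proof -
    have "compact (convex hull (vertices T))" by (rule finite_imp_compact_convex_hull[OF f(1)])
    then have "bounded (convex hull (vertices T))" by (rule compact_imp_bounded)
    then show ?thesis using f(2) by simp
  qed
  have "norm (v - x) \<le> h" if v: "v \<in> vertices T" for v
  proof -
    have "vertices T \<subseteq> convex hull (vertices T)" by (rule hull_subset)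
    then have "v \<in> T" using v f(2) by auto
    then have "dist v x \<le> diameter T" by (rule diameter_bounded_bound[OF bT _ T(2)])
    then show ?thesis using hT[OF T(1)] by (simp add: dist_norm)
  qed
  then show ?thesis unfolding eq by (rule bary_err[OF sa ph KA K0 f(1) c])
qed

lemma pt_in_omega:
  fixes \<Omega> :: "'a::euclidean_space set"
  assumes op: "open \<Omega>" and x: "x \<in> \<Omega>" and d: "dist x y < infdist x (frontier \<Omega>)"
  shows "y \<in> \<Omega>"
proof (rule ccontr)
  assume y: "y \<notin> \<Omega>"
  have "closed_segment x y \<inter> frontier \<Omega> \<noteq> {}"
    by (rule connected_Int_frontier) (use x y in auto)
  then obtain p where p: "p \<in> closed_segment x y" "p \<in> frontier \<Omega>" by blast
  have "infdist x (frontier \<Omega>) \<le> dist x p" using p(2) by (rule infdist_le)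
  also have "dist x p \<le> dist x y" using dist_in_closed_segment[OF p(1)] by (simp add: dist_commute)
  finally show False using d by simp
qed

theorem lemma3p7:
  fixes A :: "'a::euclidean_space \<Rightarrow> 'a" and \<sigma> :: real
  assumes "self_adjoint A"
  shows "\<exists>C::real. \<forall>(\<Omega>::'a set) Th \<epsilon> \<theta> S z (b::'a) (c::real) (\<phi>::'a \<Rightarrow> real).
     admissible_domain \<Omega> \<longrightarrow> is_mesh Th \<longrightarrow> shape_regular \<sigma> Th \<longrightarrow>
     inner_set \<Omega> (mesh_size Th) \<subseteq> mesh_domain Th \<longrightarrow> mesh_domain Th \<subseteq> \<Omega> \<longrightarrow>
     mesh_size Th \<le> \<epsilon> \<longrightarrow> \<epsilon> \<le> diameter \<Omega> \<longrightarrow> 0 < \<theta> \<longrightarrow> \<theta> \<le> 1 \<longrightarrow>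
     direction_set \<theta> S \<longrightarrow>
     z \<in> mesh_nodes Th \<inter> inner_set \<Omega> (2 * \<epsilon>) \<longrightarrow>
     (\<forall>x. \<phi> x = c + b \<bullet> x + (1/2) * (x \<bullet> A x)) \<longrightarrow>
     \<not> strict_local_max_in \<phi> (ball z \<epsilon>) \<longrightarrow>
     neg_disc_inf_lap Th \<epsilon> S \<phi> z \<ge>
       - lambda_max A - C * ((mesh_size Th)\<^sup>2 / \<epsilon>\<^sup>2 + \<theta>\<^sup>2)"
proof -
  note sa = assms
  have lA: "linear A" using sa unfolding self_adjoint_def by auto
  obtain K where Kp: "K > 0" and KA: "\<And>x. norm (A x) \<le> K * norm x"
    using linear_bounded_pos[OF lA] by blast
  have KA': "\<And>x. norm (A x) \<le> K * norm x" by (rule KA)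
  have K0: "K \<ge> 0" using Kp by simp
  show ?thesis
  proof (intro exI[of _ "2 * K"] allI impI)
    fix \<Omega> :: "'a set" and Th :: "'a set set" and \<epsilon> \<theta> :: real and S :: "'a set"
      and z b :: 'a and c :: real and \<phi> :: "'a \<Rightarrow> real"
    assume adm: "admissible_domain \<Omega>" and m: "is_mesh Th" and "shape_regular \<sigma> Th"
      and inn: "inner_set \<Omega> (mesh_size Th) \<subseteq> mesh_domain Th" and "mesh_domain Th \<subseteq> \<Omega>"
      and he: "mesh_size Th \<le> \<epsilon>" and "\<epsilon> \<le> diameter \<Omega>" and tp: "0 < \<theta>" and t1: "\<theta> \<le> 1"
      and ds: "direction_set \<theta> S" and zin: "z \<in> mesh_nodes Th \<inter> inner_set \<Omega> (2 * \<epsilon>)"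
      and ph: "\<forall>x. \<phi> x = c + b \<bullet> x + (1/2) * (x \<bullet> A x)"
      and nsl: "\<not> strict_local_max_in \<phi> (ball z \<epsilon>)"
    define h where "h = mesh_size Th"
    have finTh: "finite Th" and neTh: "Th \<noteq> {}" using m unfolding is_mesh_def by auto
    have hT: "\<And>T. T \<in> Th \<Longrightarrow> diameter T \<le> h"
      unfolding h_def mesh_size_def using finTh by (intro Max_ge) auto
    have hpos: "h > 0"
    proof -
      obtain T where T: "T \<in> Th" using neTh by blast
      have f: "finite (vertices T)" "T = convex hull (vertices T)" "card (vertices T) = DIM('a) + 1"
        using simplex_facts[OF m T] by auto
      have "\<not> card (vertices T) \<le> Suc 0" using f(3) by simp
      then obtain p q where pq: "p \<in> vertices T" "q \<in> vertices T" "p \<noteq> q"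
        using card_le_Suc0_iff_eq[OF f(1)] by blast
      have bT: "bounded T"
  proof -
    have "compact (convex hull (vertices T))" by (rule finite_imp_compact_convex_hull[OF f(1)])
    then have "bounded (convex hull (vertices T))" by (rule compact_imp_bounded)
    then show ?thesis using f(2) by simp
  qed
      have "vertices T \<subseteq> convex hull (vertices T)" by (rule hull_subset)
      then have pT: "p \<in> T" "q \<in> T" using pq f(2) by auto
      have "dist p q \<le> diameter T" by (rule diameter_bounded_bound[OF bT pT])
      moreover have "dist p q > 0" using pq(3) by simp
      ultimately show ?thesis using hT[OF T] by linarith
    qed
    have ep: "\<epsilon> > 0" using hpos he unfolding h_def by simp
    have opn: "open \<Omega>" using adm unfolding admissible_domain_def by simp
    have zO: "z \<in> \<Omega>" and zd: "infdist z (frontier \<Omega>) > 2 * \<epsilon>"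
      using zin unfolding inner_set_def by auto
    have inTh: "y \<in> \<Union>Th" if y: "dist z y \<le> \<epsilon>" for y
    proof -
      have yO: "y \<in> \<Omega>" using pt_in_omega[OF opn zO] y zd ep by simp
      have "infdist z (frontier \<Omega>) \<le> infdist y (frontier \<Omega>) + dist z y" by (rule infdist_triangle)
      then have "infdist y (frontier \<Omega>) > h" using zd y he unfolding h_def by simp
      then have "y \<in> inner_set \<Omega> (mesh_size Th)" using yO unfolding inner_set_def h_def by simp
      then have "y \<in> mesh_domain Th" using inn by blast
      then show ?thesis unfolding mesh_domain_def using interior_subset by blast
    qed
    define I where "I = lagrange_interp Th \<phi>"
    have Ierr: "I y \<le> \<phi> y + (1/2) * K * h^2" if "dist z y \<le> \<epsilon>" for y
    proof -
      have "\<bar>I y - \<phi> y\<bar> \<le> (1/2) * K * h^2"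
        unfolding I_def by (rule interp_err[OF sa ph KA' K0 m inTh[OF that] hT])
      then have "I y - \<phi> y \<le> (1/2) * K * h^2" by (rule abs_le_D1)
      then show ?thesis by linarith
    qed
    have Ierr2: "I y \<le> \<phi> y + (1/2) * K * h^2" if "y \<in> stencil \<epsilon> S z" for y
    proof -
      have "dist z y \<le> \<epsilon>" using that ds ep unfolding stencil_def direction_set_def
        by (auto simp: dist_norm)
      then show ?thesis by (rule Ierr)
    qed
    have finS: "finite S" and Ssph: "S \<subseteq> sphere 0 1" and Ssym: "\<And>v. v \<in> S \<Longrightarrow> - v \<in> S"
      and Scov: "\<And>v. norm v = 1 \<Longrightarrow> \<exists>u\<in>S. norm (v - u) \<le> \<theta>"
      using ds unfolding direction_set_def by auto
    obtain v0 where n0: "norm v0 = 1" and F0: "\<phi> z \<le> \<phi> (z + \<epsilon> *\<^sub>R v0)"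
      and mx: "\<forall>v. norm v = 1 \<longrightarrow> \<phi> (z + \<epsilon> *\<^sub>R v) \<le> \<phi> (z + \<epsilon> *\<^sub>R v0)"
      using sphere_max_nonneg[OF sa ph ep nsl] by blast
    obtain u where uS: "u \<in> S" and uv: "norm (v0 - u) \<le> \<theta>" using Scov[OF n0] by blast
    have nu: "norm u = 1" using uS Ssph by auto
    have uv': "norm (u - v0) \<le> \<theta>" using uv by (simp add: norm_minus_commute)
    define f where "f v = \<phi> (z + \<epsilon> *\<^sub>R v) - \<phi> z" for v
    have fu: "f u \<ge> - (3/2) * K * \<epsilon>^2 * \<theta>^2"
      unfolding f_def by (rule reflect_bound[OF sa ph KA' K0 n0 F0 mx nu uv' t1])
    have neS: "S \<noteq> {}" using uS by blast
    define Fs where "Fs = Max (f ` S)"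
    have "Fs \<in> f ` S" unfolding Fs_def using finS neS by simp
    then obtain vs where vsS: "vs \<in> S" and fvs: "f vs = Fs" by auto
    have fle: "f v \<le> Fs" if "v \<in> S" for v unfolding Fs_def using finS that by simp
    have Fsb: "Fs \<ge> - (3/2) * K * \<epsilon>^2 * \<theta>^2" using fle[OF uS] fu by simp
    have nvs: "norm vs = 1" using vsS Ssph by auto
    have mvs: "- vs \<in> S" using Ssym[OF vsS] .
    have sumf: "f vs + f (- vs) = \<epsilon>^2 * (vs \<bullet> A vs)"
    proof -
      have e1: "\<phi> (z + \<epsilon> *\<^sub>R vs) = \<phi> z + (b + A z) \<bullet> (\<epsilon> *\<^sub>R vs) + (1/2) * (\<epsilon>^2 * (vs \<bullet> A vs))"
        unfolding phi_expand[OF sa ph] quad_scale[OF sa] ..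
      have e2: "\<phi> (z + (-\<epsilon>) *\<^sub>R vs) = \<phi> z + (b + A z) \<bullet> ((-\<epsilon>) *\<^sub>R vs) + (1/2) * ((-\<epsilon>)^2 * (vs \<bullet> A vs))"
        unfolding phi_expand[OF sa ph] quad_scale[OF sa] ..
      have "z + \<epsilon> *\<^sub>R (- vs) = z + (-\<epsilon>) *\<^sub>R vs" by simp
      then show ?thesis unfolding f_def using e1 e2 by simp
    qed
    have ray: "vs \<bullet> A vs \<le> lambda_max A" by (rule rayleigh[OF sa nvs])
    define N where "N = stencil \<epsilon> S z"
    have finN: "finite N" unfolding N_def stencil_def using finS by simp
    have zN: "z \<in> N" unfolding N_def stencil_def by simp
    have mN: "z + \<epsilon> *\<^sub>R (- vs) \<in> N" unfolding N_def stencil_def using mvs by blast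
    have MaxB: "Max (I ` N) \<le> \<phi> z + max 0 Fs + (1/2) * K * h^2"
    proof (subst Max_le_iff)
      show "finite (I ` N)" using finN by simp
      show "I ` N \<noteq> {}" using zN by blast
      show "\<forall>a\<in>I ` N. a \<le> \<phi> z + max 0 Fs + (1/2) * K * h^2"
      proof
        fix a assume "a \<in> I ` N"
        then obtain y where y: "y \<in> N" "a = I y" by blast
        have ay: "a \<le> \<phi> y + (1/2) * K * h^2" using Ierr2 y unfolding N_def by simp
        show "a \<le> \<phi> z + max 0 Fs + (1/2) * K * h^2"
        proof (cases "y = z")
          case True then show ?thesis using ay by simp
        next
          case False
          then obtain v where v: "v \<in> S" "y = z + \<epsilon> *\<^sub>R v" using y(1) unfolding N_def stencil_def by auto
          have "\<phi> y = \<phi> z + f v" unfolding f_def v(2) by simp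
          then show ?thesis using ay fle[OF v(1)] by simp
        qed
      qed
    qed
    have MinB: "Min (I ` N) \<le> \<phi> z + f (- vs) + (1/2) * K * h^2"
    proof -
      have "Min (I ` N) \<le> I (z + \<epsilon> *\<^sub>R (- vs))" using finN mN by simp
      also have "\<dots> \<le> \<phi> (z + \<epsilon> *\<^sub>R (- vs)) + (1/2) * K * h^2" using Ierr2 mN unfolding N_def by simp
      finally show ?thesis unfolding f_def by simp
    qed
    define D where "D = 2 * \<phi> z - Max (I ` N) - Min (I ` N)"
    have lam: "\<epsilon>^2 * (vs \<bullet> A vs) \<le> \<epsilon>^2 * lambda_max A" using ray by (simp add: mult_left_mono)
    have Db: "D \<ge> - (\<epsilon>^2 * lambda_max A) - (3/2) * K * \<epsilon>^2 * \<theta>^2 - K * h^2"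
    proof -
      have "D \<ge> - max 0 Fs - f (- vs) - K * h^2" unfolding D_def using MaxB MinB by simp
      moreover have "f (- vs) = \<epsilon>^2 * (vs \<bullet> A vs) - Fs" using sumf fvs by simp
      ultimately have "D \<ge> - max 0 Fs + Fs - \<epsilon>^2 * (vs \<bullet> A vs) - K * h^2" by simp
      moreover have "- max 0 Fs + Fs \<ge> - (3/2) * K * \<epsilon>^2 * \<theta>^2"
        using Fsb K0 by (cases "Fs \<ge> 0") (auto simp: max_def)
      ultimately show ?thesis using lam by linarith
    qed
    have ndl: "neg_disc_inf_lap Th \<epsilon> S \<phi> z = D / \<epsilon>^2"
      unfolding neg_disc_inf_lap_def D_def I_def N_def ..
    have e2: "\<epsilon>^2 > 0" using ep by simp
    have "(- (\<epsilon>^2 * lambda_max A) - (3/2) * K * \<epsilon>^2 * \<theta>^2 - K * h^2) / \<epsilon>^2 \<le> D / \<epsilon>^2"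
      by (rule divide_right_mono[OF Db]) (use e2 in simp)
    moreover have "(- (\<epsilon>^2 * lambda_max A) - (3/2) * K * \<epsilon>^2 * \<theta>^2 - K * h^2) / \<epsilon>^2
        = - lambda_max A - (3/2) * K * \<theta>^2 - K * (h^2 / \<epsilon>^2)"
      using e2 by (simp add: field_simps)
    moreover have "K * (h^2 / \<epsilon>^2) \<ge> 0" "K * \<theta>^2 \<ge> 0" using K0 by simp_all
    moreover have "2 * K * (h^2 / \<epsilon>^2 + \<theta>^2) = 2 * (K * (h^2 / \<epsilon>^2)) + 2 * (K * \<theta>^2)"
      by (simp add: algebra_simps)
    ultimately show "neg_disc_inf_lap Th \<epsilon> S \<phi> z \<ge> - lambda_max A - 2 * K * ((mesh_size Th)\<^sup>2 / \<epsilon>\<^sup>2 + \<theta>\<^sup>2)"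
      unfolding ndl h_def[symmetric] by linarith
  qed
qed

end
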